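(* Let $m = p + 12k$ with $k \geq 0$ an integer and $p \in \{11,13,17,19\}$. Suppose $(W, X, Y, Z, P^0_0, P^1_0, Q^0_0, Q^1_0)$ is a type-2 basic set of dipaths of $G_{2m}$. For $i \in \{0,1\}$ and $j \in \{1,\dots,k-1\}$ let $P^i_j = \rho^{12j}(P^i_0)$ and $Q^i_j = \rho^{12j}(Q^i_0)$. Then the concatenations $C^0 = W P^0_0 P^0_1 \cdots P^0_{k-1} X P^1_0 P^1_1 \cdots P^1_{k-1}$ and $C^1 = Y Q^0_0 Q^0_1 \cdots Q^0_{k-1} Z Q^1_0 Q^1_1 \cdots Q^1_{k-1}$ are type-2 directed $m$-cycles of $G_{2m}$, and $C^0 \cup C^1$ is a $\vec{C}_m$-factor of $G_{2m}$.
   Context: Let $m$ be odd. $G_{2m} = \vec{X}(m,\{1,3\}) \wr K^*_2$ is the digraph with vertex set $\{x_a, y_a : a \in \mathbb{Z}_m\}$ whose arcs are: $(u_a, v_b)$ for all $u,v \in \{x,y\}$ and $a,b$ with $b-a \equiv 1$ or $3 \pmod m$, together with $(x_a,y_a)$ and $(y_a,x_a)$ for all $a$. An arc from a vertex with subscript $a$ to a vertex with subscript $b$ has difference equal to the representative of $b-a$ in $\{0,1,\dots,m-1\}$. A type-$k$ cycle is a directed $m$-cycle whose arc differences sum (as integers) to $km$. The map $\rho$ sends $x_i \mapsto x_{i+1}$, $y_i \mapsto y_{i+1}$ (subscripts mod $m$), applied vertexwise to dipaths. For a dipath $P$: $s(P)$ is its first vertex, $t(P)$ its last vertex, $\mathrm{len}(P)$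 its number of arcs (a dipath of length $0$ is a single vertex); $PQ$ denotes concatenation when $t(P)=s(Q)$. With $m = p+12k$, set $V_0 = \{x_j, y_j : 0 \le j \le p-1\}$ and, for $1 \le i \le k$, $V_i = \{x_j, y_j : p+12(i-1) \le j \le p+12i-1\}$. An 8-tuple $(W,X,Y,Z,Q,R,S,T)$ of dipaths of $G_{2m}$ is a type-2 basic set of dipaths if: (C1) $Q,R,S,T$ are pairwise vertex-disjoint; if $k\ge1$ then $W,X,Y,Z$ are pairwise vertex-disjoint, while if $k=0$ then $WX$ and $YZ$ are vertex-disjoint type-2 directed cycles; (C2) $s(X)=\rho^{-p}(t(W))$, $s(W)=\rho^{-p}(t(X))$, $s(Z)=\rho^{-p}(t(Y))$, $s(Y)=\rho^{-p}(t(Z))$; (C3) $\mathrm{len}(W)+\mathrm{len}(X)=\mathrm{len}(Y)+\mathrm{len}(Z)=p$; if $k\ge1$ then $\mathrm{len}(Q)+\mathrm{len}(R)=\mathrm{len}(S)+\mathrm{len}(T)=12$, and if $k=0$ then $Q,R,S,T$ all have length $0$; (C4) each of $W,X,Y,Z$ has its source and internal vertices in $V_0$ and its terminal vertex equal to $x_t$ or $y_t$ for some $t\in\{p,p+1,p+2\}$; (C5) $t(W)=s(Q)$, $t(X)=s(R)$, $t(Y)=s(S)$, $t(Z)=s(T)$; (C6) if $k\ge1$ and $P\in\{Q,R,S,T\}$ has $s(P)=x_t$ (resp. $y_t$), then $t(P)=x_{t+12}$ (resp. $y_{t+12}$), and all internal vertices of $P$ lie in $V_1$. A $\vec{C}_m$-factor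 is a spanning subdigraph that is a disjoint union of directed $m$-cycles. *)

theory Defs
  imports Main
begin

text \<open>Vertices of G_{2m}: (False, a) is x_a and (True, a) is y_a, with 0 <= a < m.
  Dipaths and cycles are represented as vertex lists.\<close>

type_synonym vert = "bool \<times> nat"

definition verts :: "nat \<Rightarrow> vert set" where
  "verts m = {v. snd v < m}"

definition adiff :: "nat \<Rightarrow> vert \<Rightarrow> vert \<Rightarrow> nat" where
  "adiff m u v = (snd v + m - snd u) mod m"

definition arc :: "nat \<Rightarrow> vert \<Rightarrow> vert \<Rightarrow> bool" where
  "arc m u v \<longleftrightarrow> u \<in> verts m \<and> v \<in> verts m \<and>
     (adiff m u v = 1 mod m \<or> adiff m u v = 3 mod m \<or>
      (snd u = snd v \<and> fst u \<noteq> fst v))"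

definition rho :: "nat \<Rightarrow> int \<Rightarrow> vert \<Rightarrow> vert" where
  "rho m n v = (fst v, nat ((int (snd v) + n) mod int m))"

definition rhoP :: "nat \<Rightarrow> int \<Rightarrow> vert list \<Rightarrow> vert list" where
  "rhoP m n P = map (rho m n) P"

definition dipath :: "nat \<Rightarrow> vert list \<Rightarrow> bool" where
  "dipath m P \<longleftrightarrow> P \<noteq> [] \<and> distinct P \<and> set P \<subseteq> verts m \<and>
     (\<forall>i. Suc i < length P \<longrightarrow> arc m (P ! i) (P ! Suc i))"

definition plen :: "vert list \<Rightarrow> nat" where
  "plen P = length P - 1"

definition dicycle :: "nat \<Rightarrow> vert list \<Rightarrow> bool" where
  "dicycle m C \<longleftrightarrow> length C = m \<and> distinct C \<and> set C \<subseteq> verts m \<and>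
     (\<forall>i<m. arc m (C ! i) (C ! ((i + 1) mod m)))"

definition type_cycle :: "nat \<Rightarrow> nat \<Rightarrow> vert list \<Rightarrow> bool" where
  "type_cycle m k C \<longleftrightarrow> dicycle m C \<and>
     (\<Sum>i<m. adiff m (C ! i) (C ! ((i + 1) mod m))) = k * m"

definition closed_type_cycle :: "nat \<Rightarrow> nat \<Rightarrow> vert list \<Rightarrow> bool" where
  "closed_type_cycle m k W \<longleftrightarrow> W \<noteq> [] \<and> last W = hd W \<and> type_cycle m k (butlast W)"

definition chain :: "vert list list \<Rightarrow> bool" where
  "chain Ps \<longleftrightarrow> (\<forall>i. Suc i < length Ps \<longrightarrow> last (Ps ! i) = hd (Ps ! Suc i))"

fun concat_walk :: "vert list list \<Rightarrow> vert list" where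
  "concat_walk [] = []"
| "concat_walk (P # Ps) = P @ concat (map tl Ps)"

definition V0 :: "nat \<Rightarrow> vert set" where
  "V0 p = {v. snd v < p}"

definition Vi :: "nat \<Rightarrow> nat \<Rightarrow> vert set" where
  "Vi p i = {v. p + 12 * (i - 1) \<le> snd v \<and> snd v \<le> p + 12 * i - 1}"

definition C4 :: "nat \<Rightarrow> nat \<Rightarrow> vert list \<Rightarrow> bool" where
  "C4 m p P \<longleftrightarrow> hd P \<in> V0 p \<and> set (butlast P) \<subseteq> V0 p \<and>
     snd (last P) \<in> {p mod m, (p + 1) mod m, (p + 2) mod m}"

definition C6 :: "nat \<Rightarrow> nat \<Rightarrow> vert list \<Rightarrow> bool" where
  "C6 m p P \<longleftrightarrow> last P = rho m 12 (hd P) \<and> set (butlast (tl P)) \<subseteq> Vi p 1"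

definition disj4 :: "vert list \<Rightarrow> vert list \<Rightarrow> vert list \<Rightarrow> vert list \<Rightarrow> bool" where
  "disj4 A B C D \<longleftrightarrow> set A \<inter> set B = {} \<and> set A \<inter> set C = {} \<and> set A \<inter> set D = {} \<and>
     set B \<inter> set C = {} \<and> set B \<inter> set D = {} \<and> set C \<inter> set D = {}"

definition type2_basic :: "nat \<Rightarrow> nat \<Rightarrow> nat \<Rightarrow>
    vert list \<Rightarrow> vert list \<Rightarrow> vert list \<Rightarrow> vert list \<Rightarrow>
    vert list \<Rightarrow> vert list \<Rightarrow> vert list \<Rightarrow> vert list \<Rightarrow> bool" where
  "type2_basic m p k W X Y Z Q R S T \<longleftrightarrow>
     (\<forall>P\<in>{W, X, Y, Z, Q, R, S, T}. dipath m P) \<and>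
     \<comment> \<open>C1\<close>
     disj4 Q R S T \<and>
     (k \<ge> 1 \<longrightarrow> disj4 W X Y Z) \<and>
     (k = 0 \<longrightarrow> closed_type_cycle m 2 (W @ tl X) \<and> closed_type_cycle m 2 (Y @ tl Z) \<and>
                set (W @ tl X) \<inter> set (Y @ tl Z) = {}) \<and>
     \<comment> \<open>C2\<close>
     hd X = rho m (- int p) (last W) \<and> hd W = rho m (- int p) (last X) \<and>
     hd Z = rho m (- int p) (last Y) \<and> hd Y = rho m (- int p) (last Z) \<and>
     \<comment> \<open>C3\<close>
     plen W + plen X = p \<and> plen Y + plen Z = p \<and>
     (k \<ge> 1 \<longrightarrow> plen Q + plen R = 12 \<and> plen S + plen T = 12) \<and>
     (k = 0 \<longrightarrow> plen Q = 0 \<and> plen R = 0 \<and> plen S = 0 \<and> plen T = 0) \<and>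
     \<comment> \<open>C4\<close>
     C4 m p W \<and> C4 m p X \<and> C4 m p Y \<and> C4 m p Z \<and>
     \<comment> \<open>C5\<close>
     last W = hd Q \<and> last X = hd R \<and> last Y = hd S \<and> last Z = hd T \<and>
     \<comment> \<open>C6\<close>
     (k \<ge> 1 \<longrightarrow> C6 m p Q \<and> C6 m p R \<and> C6 m p S \<and> C6 m p T)"

definition Cm_factor :: "nat \<Rightarrow> vert list list \<Rightarrow> bool" where
  "Cm_factor m Cs \<longleftrightarrow> (\<forall>C\<in>set Cs. dicycle m C) \<and>
     (\<forall>i j. i < length Cs \<longrightarrow> j < length Cs \<longrightarrow> i \<noteq> j \<longrightarrow> set (Cs ! i) \<inter> set (Cs ! j) = {}) \<and>
     (\<Union>C\<in>set Cs. set C) = verts m"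

end

theory Submission imports Defs begin

fun wsum :: "nat \<Rightarrow> vert list \<Rightarrow> nat" where
  "wsum m (a # b # r) = adiff m a b + wsum m (b # r)"
| "wsum m _ = 0"

fun walk :: "nat \<Rightarrow> vert list \<Rightarrow> bool" where
  "walk m (a # b # r) = (arc m a b \<and> walk m (b # r))"
| "walk m _ = True"

lemma walk_idx: "walk m P \<longleftrightarrow> (\<forall>i. Suc i < length P \<longrightarrow> arc m (P ! i) (P ! Suc i))"
proof (induction m P rule: walk.induct)
  case (1 m a b r)
  show ?case
  proof
    assume "walk m (a # b # r)"
    then have h: "arc m a b" "\<forall>i. Suc i < length (b#r) \<longrightarrow> arc m ((b#r) ! i) ((b#r) ! Suc i)"
      using 1 by auto
    show "\<forall>i. Suc i < length (a # b # r) \<longrightarrow> arc m ((a # b # r) ! i) ((a # b # r) ! Suc i)"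
    proof (intro allI impI)
      fix i assume "Suc i < length (a # b # r)"
      then show "arc m ((a # b # r) ! i) ((a # b # r) ! Suc i)" using h by (cases i) auto
    qed
  next
    assume h: "\<forall>i. Suc i < length (a # b # r) \<longrightarrow> arc m ((a # b # r) ! i) ((a # b # r) ! Suc i)"
    have "arc m a b" using h[rule_format, of 0] by simp
    moreover have "\<forall>i. Suc i < length (b#r) \<longrightarrow> arc m ((b#r) ! i) ((b#r) ! Suc i)"
    proof (intro allI impI)
      fix i assume "Suc i < length (b#r)"
      then show "arc m ((b#r) ! i) ((b#r) ! Suc i)" using h[rule_format, of "Suc i"] by simp
    qed
    ultimately show "walk m (a # b # r)" using 1 by simp
  qed
qed auto

lemma wsum_idx: "wsum m P = (\<Sum>i<length P - 1. adiff m (P ! i) (P ! Suc i))"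
proof (induction m P rule: wsum.induct)
  case (1 m a b r)
  then show ?case by (simp add: sum.lessThan_Suc_shift del: sum.lessThan_Suc)
qed auto

lemma app_tl: "A \<noteq> [] \<Longrightarrow> B \<noteq> [] \<Longrightarrow> last A = hd B \<Longrightarrow> A @ tl B = butlast A @ B"
proof -
  assume a: "A \<noteq> []" "B \<noteq> []" "last A = hd B"
  have "A @ tl B = butlast A @ [last A] @ tl B" using a(1) by simp
  also have "[last A] @ tl B = B" using a(2,3) by simp
  finally show ?thesis .
qed

lemma walk_app: "A \<noteq> [] \<Longrightarrow> B \<noteq> [] \<Longrightarrow> last A = hd B \<Longrightarrow> walk m (A @ tl B) \<longleftrightarrow> walk m A \<and> walk m B"
proof (induction A rule: induct_list012)
  case (2 x) then show ?case by (cases B) auto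
next
  case (3 a b A') then show ?case by simp
qed simp

lemma wsum_app: "A \<noteq> [] \<Longrightarrow> B \<noteq> [] \<Longrightarrow> last A = hd B \<Longrightarrow> wsum m (A @ tl B) = wsum m A + wsum m B"
proof (induction A rule: induct_list012)
  case (2 x) then show ?case by (cases B) auto
next
  case (3 a b A') then show ?case by simp
qed simp

lemma chain_single: "chain [P]" by (simp add: chain_def)
lemma chain_Nil: "chain []" by (simp add: chain_def)

lemma chain_Cons2: "chain (P # Q # Ps) \<longleftrightarrow> last P = hd Q \<and> chain (Q # Ps)"
proof
  assume h: "chain (P # Q # Ps)"
  have "last P = hd Q" using h[unfolded chain_def, rule_format, of 0] by simp
  moreover have "chain (Q # Ps)" unfolding chain_def
  proof (intro allI impI)
    fix i assume "Suc i < length (Q # Ps)"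
    then show "last ((Q # Ps) ! i) = hd ((Q # Ps) ! Suc i)"
      using h[unfolded chain_def, rule_format, of "Suc i"] by simp
  qed
  ultimately show "last P = hd Q \<and> chain (Q # Ps)" by simp
next
  assume h: "last P = hd Q \<and> chain (Q # Ps)"
  show "chain (P # Q # Ps)" unfolding chain_def
  proof (intro allI impI)
    fix i assume i: "Suc i < length (P # Q # Ps)"
    show "last ((P # Q # Ps) ! i) = hd ((P # Q # Ps) ! Suc i)"
    proof (cases i)
      case 0 then show ?thesis using h by simp
    next
      case (Suc j) then show ?thesis using h[THEN conjunct2, unfolded chain_def, rule_format, of j] i by simp
    qed
  qed
qed

lemma chain_append: "chain (xs @ ys) \<longleftrightarrow> chain xs \<and> chain ys \<and>
   (xs \<noteq> [] \<longrightarrow> ys \<noteq> [] \<longrightarrow> last (last xs) = hd (hd ys))"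
proof (induction xs rule: induct_list012)
  case 1 then show ?case by (simp add: chain_Nil)
next
  case (2 x) then show ?case by (cases ys) (auto simp: chain_Cons2 chain_single chain_Nil)
next
  case (3 a b xs') then show ?case by (auto simp: chain_Cons2)
qed

lemma cw_Cons2: "Q \<noteq> [] \<Longrightarrow> concat_walk (P # Q # Ps) = P @ tl (concat_walk (Q # Ps))"
  by simp

lemma cw_all:
  assumes "chain L" "\<forall>P\<in>set L. P \<noteq> []" "L \<noteq> []"
  shows "concat_walk L \<noteq> [] \<and> hd (concat_walk L) = hd (hd L) \<and> last (concat_walk L) = last (last L) \<and>
    wsum m (concat_walk L) = sum_list (map (wsum m) L) \<and>
    butlast (concat_walk L) = concat (map butlast L) \<and>
    (walk m (concat_walk L) \<longleftrightarrow> (\<forall>P\<in>set L. walk m P)) \<and> set (concat_walk L) = \<Union> (set ` set L)"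
  using assms
proof (induction L rule: induct_list012)
  case 1 then show ?case by simp
next
  case (2 x) then show ?case by simp
next
  case (3 P Q Ps)
  obtain C where Cd: "C = concat_walk (Q # Ps)" by blast
  have ch: "last P = hd Q" "chain (Q # Ps)" using 3(3) by (auto simp: chain_Cons2)
  have ne: "P \<noteq> []" "Q \<noteq> []" using 3(4) by auto
  have IH: "C \<noteq> [] \<and> hd C = hd Q \<and> last C = last (last (Q#Ps)) \<and>
    wsum m C = sum_list (map (wsum m) (Q#Ps)) \<and>
    butlast C = concat (map butlast (Q#Ps)) \<and>
    (walk m C \<longleftrightarrow> (\<forall>P\<in>set (Q#Ps). walk m P)) \<and> set C = \<Union> (set ` set (Q#Ps))"
    unfolding Cd using 3(2) ch 3(4) by auto
  have Cne: "C \<noteq> []" and hC: "hd C = last P" using IH ch by auto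
  have eq: "concat_walk (P # Q # Ps) = P @ tl C" using ne Cd by simp
  have eq2: "P @ tl C = butlast P @ C" using app_tl[of P C] ne Cne hC by simp
  have "hd (P @ tl C) = hd P" using ne by simp
  moreover have "last (P @ tl C) = last C" using eq2 Cne by simp
  moreover have "wsum m (P @ tl C) = wsum m P + wsum m C" using wsum_app[of P C] ne Cne hC by simp
  moreover have "walk m (P @ tl C) \<longleftrightarrow> walk m P \<and> walk m C" using walk_app[of P C] ne Cne hC by simp
  moreover have "butlast (P @ tl C) = butlast P @ butlast C" unfolding eq2 using Cne by (simp add: butlast_append)
  moreover have "set (P @ tl C) = set P \<union> set C"
  proof -
    have "set C = insert (hd C) (set (tl C))" using Cne by (metis list.collapse list.simps(15))
    moreover have "hd C \<in> set P" using hC ne by simp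
    ultimately show ?thesis by auto
  qed
  ultimately show ?case using eq IH ne by auto
qed


lemma snd_rho: "snd (rho m n v) = nat ((int (snd v) + n) mod int m)" by (simp add: rho_def)
lemma fst_rho: "fst (rho m n v) = fst v" by (simp add: rho_def)

lemma rho_verts: "m > 0 \<Longrightarrow> rho m n v \<in> verts m"
  by (simp add: verts_def rho_def nat_less_iff)

lemma rho_rho: "m > 0 \<Longrightarrow> rho m a (rho m b v) = rho m (a + b) v"
proof -
  assume m: "m > 0"
  have "(int (nat ((int (snd v) + b) mod int m)) + a) mod int m = (int (snd v) + (a + b)) mod int m"
    using m by (simp add: mod_add_right_eq algebra_simps)
  then show ?thesis by (simp add: rho_def)
qed

lemma rho_cong: "a mod int m = b mod int m \<Longrightarrow> rho m a v = rho m b v"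
  by (simp add: rho_def) (metis mod_add_right_eq)

lemma rho_0: "snd v < m \<Longrightarrow> rho m 0 v = v"
proof -
  assume "snd v < m"
  then have "int (snd v) mod int m = int (snd v)" by simp
  then show ?thesis by (simp add: rho_def)
qed

lemma rho_snd_eq: "0 \<le> int (snd v) + n \<Longrightarrow> int (snd v) + n < int m \<Longrightarrow> snd (rho m n v) = nat (int (snd v) + n)"
  by (simp add: rho_def)

lemma adiff_int: "snd u \<le> m \<Longrightarrow> int (adiff m u v) = (int (snd v) - int (snd u)) mod int m"
proof -
  assume a: "snd u \<le> m"
  have "int (adiff m u v) = int (snd v + m - snd u) mod int m" by (simp add: adiff_def of_nat_mod)
  also have "int (snd v + m - snd u) = (int (snd v) - int (snd u)) + int m" using a by simp
  finally show ?thesis by simp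
qed

lemma adiff_rho: "m > 0 \<Longrightarrow> snd u \<le> m \<Longrightarrow> adiff m (rho m n u) (rho m n v) = adiff m u v"
proof -
  assume m: "m > 0" and u: "snd u \<le> m"
  have su: "snd (rho m n u) \<le> m" using rho_verts[OF m, of n u] by (simp add: verts_def)
  have "int (adiff m (rho m n u) (rho m n v)) = (int (snd (rho m n v)) - int (snd (rho m n u))) mod int m"
    using adiff_int[OF su] .
  also have "\<dots> = ((int (snd v) + n) mod int m - (int (snd u) + n) mod int m) mod int m"
    using m by (simp add: snd_rho)
  also have "\<dots> = (int (snd v) - int (snd u)) mod int m" by (simp add: mod_diff_eq)
  also have "\<dots> = int (adiff m u v)" using adiff_int[OF u] by simp
  finally show ?thesis by simp
qed

lemma arc_rho: "m > 0 \<Longrightarrow> arc m u v \<Longrightarrow> arc m (rho m n u) (rho m n v)"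
proof -
  assume m: "m > 0" and a: "arc m u v"
  have u: "snd u \<le> m" using a by (simp add: arc_def verts_def)
  show ?thesis using a adiff_rho[OF m u, of n v] rho_verts[OF m]
    by (auto simp: arc_def rho_def)
qed

lemma rho_inj: "m > 0 \<Longrightarrow> snd u < m \<Longrightarrow> snd v < m \<Longrightarrow> rho m n u = rho m n v \<Longrightarrow> u = v"
proof -
  assume m: "m > 0" and u: "snd u < m" and v: "snd v < m" and e: "rho m n u = rho m n v"
  have "rho m (-n) (rho m n u) = rho m (-n) (rho m n v)" using e by simp
  then show ?thesis using rho_rho[OF m] rho_0[OF u] rho_0[OF v] by simp
qed

lemma walk_rhoP: "m > 0 \<Longrightarrow> walk m P \<Longrightarrow> walk m (rhoP m n P)"
  by (induction m P rule: walk.induct) (auto simp: rhoP_def arc_rho)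

lemma wsum_rhoP: "m > 0 \<Longrightarrow> set P \<subseteq> verts m \<Longrightarrow> wsum m (rhoP m n P) = wsum m P"
  by (induction m P rule: wsum.induct) (auto simp: rhoP_def adiff_rho verts_def)

lemma distinct_rhoP: "m > 0 \<Longrightarrow> set P \<subseteq> verts m \<Longrightarrow> distinct P \<Longrightarrow> distinct (rhoP m n P)"
proof -
  assume m: "m > 0" and s: "set P \<subseteq> verts m" and d: "distinct P"
  have "inj_on (rho m n) (set P)"
  proof (rule inj_onI)
    fix u v assume u: "u \<in> set P" and v: "v \<in> set P" and e: "rho m n u = rho m n v"
    have "snd u < m" "snd v < m" using u v s by (auto simp: verts_def)
    then show "u = v" using rho_inj[OF m _ _ e] by simp
  qed
  then show ?thesis using d by (simp add: rhoP_def distinct_map)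
qed

lemma hd_rhoP: "P \<noteq> [] \<Longrightarrow> hd (rhoP m n P) = rho m n (hd P)" by (simp add: rhoP_def hd_map)
lemma last_rhoP: "P \<noteq> [] \<Longrightarrow> last (rhoP m n P) = rho m n (last P)" by (simp add: rhoP_def last_map)
lemma butlast_rhoP: "butlast (rhoP m n P) = rhoP m n (butlast P)" by (simp add: rhoP_def map_butlast)
lemma set_rhoP: "set (rhoP m n P) = rho m n ` set P" by (simp add: rhoP_def)
lemma rhoP_ne: "rhoP m n P \<noteq> [] \<longleftrightarrow> P \<noteq> []" by (simp add: rhoP_def)
lemma length_rhoP: "length (rhoP m n P) = length P" by (simp add: rhoP_def)

lemma unwrap: "m > 3 \<Longrightarrow> walk m P \<Longrightarrow> set P \<subseteq> verts m \<Longrightarrow> (\<forall>v\<in>set (butlast P). snd v + 3 < m) \<Longrightarrow> P \<noteq> []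
  \<Longrightarrow> snd (last P) = snd (hd P) + wsum m P"
proof (induction m P rule: wsum.induct)
  case (1 m a b r)
  have ab: "arc m a b" and sa: "snd a + 3 < m" and sb: "snd b < m"
    using 1(2,3,4,5) by (auto simp: verts_def)
  have d3: "adiff m a b \<le> 3" using ab 1(2) by (auto simp: arc_def adiff_def)
  have step: "snd b = snd a + adiff m a b"
  proof (cases "snd a \<le> snd b")
    case True
    then have "snd b + m - snd a = (snd b - snd a) + m" by simp
    then have "adiff m a b = (snd b - snd a) mod m" by (simp add: adiff_def)
    also have "\<dots> = snd b - snd a" using sb by simp
    finally show ?thesis using True by simp
  next
    case False
    then have "adiff m a b = snd b + m - snd a" using sa by (simp add: adiff_def)
    then show ?thesis using False d3 sa by simp
  qed
  have "snd (last (b # r)) = snd (hd (b # r)) + wsum m (b # r)"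
    using 1 by auto
  then show ?case using step by simp
qed auto


definition lay :: "nat \<Rightarrow> nat \<Rightarrow> vert list \<Rightarrow> vert list" where
  "lay m k P = concat (map (\<lambda>j. rhoP m (12 * int j) (butlast P)) [0..<k])"

lemma lay_Suc: "lay m (Suc k) P = lay m k P @ rhoP m (12 * int k) (butlast P)"
  by (simp add: lay_def)

lemma lay_set: "v \<in> set (lay m k P) \<longleftrightarrow> (\<exists>j<k. \<exists>u\<in>set (butlast P). v = rho m (12 * int j) u)"
  by (auto simp: lay_def rhoP_def)

lemma lay_length: "length (lay m k P) = k * length (butlast P)"
  by (induction k) (simp_all add: lay_Suc length_rhoP lay_def)

lemma snd_rho_band: "u \<in> Vi p 1 \<Longrightarrow> j < k \<Longrightarrow> p + 12 * k \<le> m \<Longrightarrow> snd (rho m (12 * int j) u) = snd u + 12 * j"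
proof -
  assume u: "u \<in> Vi p 1" and j: "j < k" and pk: "p + 12 * k \<le> m"
  have "snd u \<le> p + 11" using u by (simp add: Vi_def)
  then have "snd u + 12 * j < m" using j pk by linarith
  then show ?thesis using rho_snd_eq[of u "12 * int j" m] by simp
qed

lemma lay_snd: "v \<in> set (lay m k P) \<Longrightarrow> set (butlast P) \<subseteq> Vi p 1 \<Longrightarrow> p + 12 * k \<le> m \<Longrightarrow> p \<le> snd v"
proof -
  assume v: "v \<in> set (lay m k P)" and s: "set (butlast P) \<subseteq> Vi p 1" and pk: "p + 12 * k \<le> m"
  obtain j u where j: "j < k" and u: "u \<in> set (butlast P)" and e: "v = rho m (12 * int j) u"
    using v lay_set by blast
  have uV: "u \<in> Vi p 1" using u s by auto
  then have "p \<le> snd u" by (simp add: Vi_def)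
  then show ?thesis using snd_rho_band[OF uV j pk] e by simp
qed

lemma lay_distinct: "distinct (butlast P) \<Longrightarrow> set (butlast P) \<subseteq> Vi p 1 \<inter> verts m \<Longrightarrow> p + 12 * k \<le> m \<Longrightarrow> m > 0
  \<Longrightarrow> distinct (lay m k P)"
proof (induction k)
  case 0 then show ?case by (simp add: lay_def)
next
  case (Suc k)
  have d1: "distinct (lay m k P)" using Suc by simp
  have d2: "distinct (rhoP m (12 * int k) (butlast P))" using Suc.prems by (intro distinct_rhoP) auto
  have disj: "set (lay m k P) \<inter> set (rhoP m (12 * int k) (butlast P)) = {}"
  proof (rule ccontr)
    assume "\<not> ?thesis"
    then obtain v where v1: "v \<in> set (lay m k P)" and v2: "v \<in> set (rhoP m (12 * int k) (butlast P))" by blast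
    obtain j u where j: "j < k" and u: "u \<in> set (butlast P)" and e: "v = rho m (12 * int j) u"
      using v1 lay_set by blast
    obtain u' where u': "u' \<in> set (butlast P)" and e': "v = rho m (12 * int k) u'"
      using v2 by (auto simp: set_rhoP)
    have uV: "u \<in> Vi p 1" "u' \<in> Vi p 1" using u u' Suc.prems by auto
    have "snd v = snd u + 12 * j" using snd_rho_band[OF uV(1), of j "Suc k" m] j Suc.prems e by simp
    moreover have "snd v = snd u' + 12 * k" using snd_rho_band[OF uV(2), of k "Suc k" m] Suc.prems e' by simp
    moreover have "snd u \<le> p + 11" "p \<le> snd u'" using uV by (auto simp: Vi_def)
    ultimately show False using j by linarith
  qed
  show ?case using d1 d2 disj by (simp add: lay_Suc)
qed

lemma lay_disj: "set (butlast P) \<subseteq> Vi p 1 \<inter> verts m \<Longrightarrow> set (butlast R) \<subseteq> Vi p 1 \<inter> verts m \<Longrightarrow>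
  set (butlast P) \<inter> set (butlast R) = {} \<Longrightarrow> p + 12 * k \<le> m \<Longrightarrow> m > 0 \<Longrightarrow>
  set (lay m k P) \<inter> set (lay m k R) = {}"
proof (rule ccontr)
  assume sP: "set (butlast P) \<subseteq> Vi p 1 \<inter> verts m" and sR: "set (butlast R) \<subseteq> Vi p 1 \<inter> verts m"
    and PR: "set (butlast P) \<inter> set (butlast R) = {}" and pk: "p + 12 * k \<le> m" and m: "m > 0"
    and "set (lay m k P) \<inter> set (lay m k R) \<noteq> {}"
  then obtain v where v1: "v \<in> set (lay m k P)" and v2: "v \<in> set (lay m k R)" by blast
  obtain j u where j: "j < k" and u: "u \<in> set (butlast P)" and e: "v = rho m (12 * int j) u"
    using v1 lay_set by blast
  obtain j' u' where j': "j' < k" and u': "u' \<in> set (butlast R)" and e': "v = rho m (12 * int j') u'"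
    using v2 lay_set by blast
  have uV: "u \<in> Vi p 1" "u' \<in> Vi p 1" using u u' sP sR by auto
  have "snd v = snd u + 12 * j" using snd_rho_band[OF uV(1) j pk] e by simp
  moreover have "snd v = snd u' + 12 * j'" using snd_rho_band[OF uV(2) j' pk] e' by simp
  moreover have "p \<le> snd u" "snd u \<le> p + 11" "p \<le> snd u'" "snd u' \<le> p + 11" using uV by (auto simp: Vi_def)
  ultimately have jj: "j = j'" by presburger
  have "snd u < m" "snd u' < m" using u u' sP sR by (auto simp: verts_def)
  then have "u = u'" using rho_inj[OF m, of u u' "12 * int j"] e e' jj by simp
  then show False using u u' PR by auto
qed

lemma closed_lemma:
  assumes m: "m > 0" and w: "walk m C" and len: "length C = Suc m" and d: "distinct (butlast C)"
    and s: "set C \<subseteq> verts m" and cl: "last C = hd C" and ws: "wsum m C = t * m"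
  shows "closed_type_cycle m t C"
proof -
  have Cne: "C \<noteq> []" using len by auto
  let ?B = "butlast C"
  have lB: "length ?B = m" using len by simp
  have key: "?B ! i = C ! i \<and> ?B ! ((i + 1) mod m) = C ! Suc i" if i: "i < m" for i
  proof -
    have "?B ! i = C ! i" using i lB by (simp add: nth_butlast)
    moreover have "?B ! ((i + 1) mod m) = C ! Suc i"
    proof (cases "Suc i < m")
      case True then show ?thesis using lB by (simp add: nth_butlast)
    next
      case False
      then have si: "Suc i = m" using i by simp
      then have "?B ! ((i + 1) mod m) = ?B ! 0" by simp
      also have "\<dots> = C ! 0" using lB m by (simp add: nth_butlast)
      also have "\<dots> = hd C" using Cne by (simp add: hd_conv_nth)
      also have "\<dots> = last C" using cl by simp
      also have "\<dots> = C ! m" using Cne len by (simp add: last_conv_nth)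
      finally show ?thesis using si by simp
    qed
    ultimately show ?thesis by simp
  qed
  have arcs: "\<forall>i<m. arc m (?B ! i) (?B ! ((i + 1) mod m))"
  proof (intro allI impI)
    fix i assume i: "i < m"
    have "arc m (C ! i) (C ! Suc i)" using w[unfolded walk_idx] i len by simp
    then show "arc m (?B ! i) (?B ! ((i + 1) mod m))" using key[OF i] by simp
  qed
  have "(\<Sum>i<m. adiff m (?B ! i) (?B ! ((i + 1) mod m))) = (\<Sum>i<m. adiff m (C ! i) (C ! Suc i))"
  proof (rule sum.cong)
    fix i assume "i \<in> {..<m}"
    then have i: "i < m" by simp
    have e1: "?B ! i = C ! i" and e2: "?B ! ((i + 1) mod m) = C ! Suc i" using key[OF i] by blast+
    show "adiff m (?B ! i) (?B ! ((i + 1) mod m)) = adiff m (C ! i) (C ! Suc i)"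
      by (simp only: e1 e2)
  qed simp
  also have "\<dots> = wsum m C" using len by (simp add: wsum_idx)
  finally have sm: "(\<Sum>i<m. adiff m (?B ! i) (?B ! ((i + 1) mod m))) = t * m" using ws by simp
  have sB: "set ?B \<subseteq> verts m" using s by (meson in_set_butlastD subset_iff)
  show ?thesis unfolding closed_type_cycle_def type_cycle_def dicycle_def
    using Cne cl lB d sB arcs sm by simp
qed

lemma verts_eq: "verts m = UNIV \<times> {..<m}" by (auto simp: verts_def)

lemma factor2: "dicycle m B0 \<Longrightarrow> dicycle m B1 \<Longrightarrow> set B0 \<inter> set B1 = {} \<Longrightarrow> Cm_factor m [B0, B1]"
proof -
  assume d0: "dicycle m B0" and d1: "dicycle m B1" and dj: "set B0 \<inter> set B1 = {}"
  have c0: "card (set B0) = m" and c1: "card (set B1) = m" using d0 d1 by (auto simp: dicycle_def distinct_card)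
  have sub: "set B0 \<union> set B1 \<subseteq> verts m" using d0 d1 by (auto simp: dicycle_def)
  have fin: "finite (verts m)" by (simp add: verts_eq)
  have cv: "card (verts m) = 2 * m" by (simp add: verts_eq card_cartesian_product)
  have "card (set B0 \<union> set B1) = 2 * m" using c0 c1 dj by (simp add: card_Un_disjoint)
  then have U: "set B0 \<union> set B1 = verts m" using card_subset_eq[OF fin sub] cv by simp
  have pairs: "\<forall>i j. i < length [B0, B1] \<longrightarrow> j < length [B0, B1] \<longrightarrow> i \<noteq> j \<longrightarrow> set ([B0, B1] ! i) \<inter> set ([B0, B1] ! j) = {}"
  proof (intro allI impI)
    fix i j assume "i < length [B0, B1]" "j < length [B0, B1]" "i \<noteq> j"
    then have "(i = 0 \<and> j = 1) \<or> (i = 1 \<and> j = 0)" by auto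
    then show "set ([B0, B1] ! i) \<inter> set ([B0, B1] ! j) = {}" using dj by auto
  qed
  show ?thesis unfolding Cm_factor_def using d0 d1 pairs U by simp
qed


lemma dipathD: "dipath m P \<Longrightarrow> P \<noteq> [] \<and> distinct P \<and> set P \<subseteq> verts m \<and> walk m P"
  by (simp add: dipath_def walk_idx)

lemma bl_Vi: "C6 m p P \<Longrightarrow> hd P \<in> Vi p 1 \<Longrightarrow> P \<noteq> [] \<Longrightarrow> set (butlast P) \<subseteq> Vi p 1"
  by (cases P) (auto simp: C6_def split: if_splits)

lemma c4_last: "C4 m p W \<Longrightarrow> p + 3 \<le> m \<Longrightarrow> p \<le> snd (last W) \<and> snd (last W) \<le> p + 2"
  by (auto simp: C4_def)

lemma seg_wsum:
  assumes p11: "11 \<le> p" and pm: "p + 12 \<le> m" and dP: "dipath m P" and c6: "C6 m p P"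
    and h1: "p \<le> snd (hd P)" and h2: "snd (hd P) \<le> p + 2"
  shows "wsum m P = 12"
proof -
  have m: "m > 0" "m > 3" using p11 pm by auto
  have P: "P \<noteq> []" "distinct P" "set P \<subseteq> verts m" "walk m P" using dipathD[OF dP] by auto
  have hV: "hd P \<in> Vi p 1" using h1 h2 by (simp add: Vi_def)
  have bl: "set (butlast P) \<subseteq> Vi p 1" using bl_Vi[OF c6 hV P(1)] .
  define P' where "P' = rhoP m (- int p) P"
  have w': "walk m P'" unfolding P'_def using walk_rhoP[OF m(1) P(4)] .
  have s': "set P' \<subseteq> verts m" unfolding P'_def using rho_verts[OF m(1)] by (auto simp: set_rhoP)
  have ne': "P' \<noteq> []" unfolding P'_def using P(1) by (simp add: rhoP_ne)
  have b': "\<forall>v\<in>set (butlast P'). snd v + 3 < m"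
  proof
    fix v assume "v \<in> set (butlast P')"
    then obtain u where u: "u \<in> set (butlast P)" and e: "v = rho m (- int p) u"
      unfolding P'_def butlast_rhoP set_rhoP by auto
    have "p \<le> snd u" "snd u \<le> p + 11" using u bl by (auto simp: Vi_def)
    then have "snd v = snd u - p" using rho_snd_eq[of u "- int p" m] e pm by simp
    then show "snd v + 3 < m" using \<open>snd u \<le> p + 11\<close> pm p11 by linarith
  qed
  have lP: "last P = rho m 12 (hd P)" using c6 by (simp add: C6_def)
  have "last P' = rho m (- int p) (rho m 12 (hd P))" unfolding P'_def using P(1) lP by (simp add: last_rhoP)
  also have "\<dots> = rho m (12 - int p) (hd P)" using rho_rho[OF m(1)] by simp
  finally have lP': "last P' = rho m (12 - int p) (hd P)" .
  have i1: "0 \<le> int (snd (hd P)) + (12 - int p)" "int (snd (hd P)) + (12 - int p) < int m"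
    using h1 h2 pm p11 by linarith+
  have "snd (last P') = nat (int (snd (hd P)) + (12 - int p))"
    using rho_snd_eq[OF i1] lP' by simp
  also have "\<dots> = snd (hd P) + 12 - p" using h1 by linarith
  finally have "snd (last P') = snd (hd P) + 12 - p" .
  moreover have "snd (hd P') = snd (hd P) - p"
    unfolding P'_def using P(1) rho_snd_eq[of "hd P" "- int p" m] h1 h2 pm by (simp add: hd_rhoP)
  moreover have "snd (last P') = snd (hd P') + wsum m P'" using unwrap[OF m(2) w' s' b' ne'] .
  ultimately have "wsum m P' = 12" using h1 by linarith
  moreover have "wsum m P' = wsum m P" unfolding P'_def using wsum_rhoP[OF m(1) P(3)] .
  ultimately show ?thesis by simp
qed

lemma last_shift: "m > 0 \<Longrightarrow> P \<noteq> [] \<Longrightarrow> last P = rho m 12 (hd P) \<Longrightarrow>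
   last (rhoP m (12 * int j) P) = rho m (12 * int (Suc j)) (hd P)"
proof -
  assume m: "m > 0" and P: "P \<noteq> []" and l: "last P = rho m 12 (hd P)"
  have "last (rhoP m (12 * int j) P) = rho m (12 * int j) (rho m 12 (hd P))" using P l by (simp add: last_rhoP)
  also have "\<dots> = rho m (12 * int j + 12) (hd P)" using rho_rho[OF m] by simp
  also have "12 * int j + 12 = 12 * int (Suc j)" by simp
  finally show ?thesis .
qed

lemma chain_shift: "m > 0 \<Longrightarrow> P \<noteq> [] \<Longrightarrow> last P = rho m 12 (hd P) \<Longrightarrow>
   chain (map (\<lambda>j. rhoP m (12 * int j) P) [0..<k])"
  unfolding chain_def by (auto simp: last_shift hd_rhoP rhoP_ne)


lemma half:
  fixes m p k :: nat and W X P R :: "vert list"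
  assumes p11: "p \<ge> 11" and k1: "k \<ge> 1" and mdef: "m = p + 12 * k"
    and dW: "dipath m W" and dX: "dipath m X" and dP: "dipath m P" and dR: "dipath m R"
    and WX: "set W \<inter> set X = {}" and PR: "set P \<inter> set R = {}"
    and hX: "hd X = rho m (- int p) (last W)" and hW: "hd W = rho m (- int p) (last X)"
    and lWX: "plen W + plen X = p" and lPR: "plen P + plen R = 12"
    and c4W: "C4 m p W" and c4X: "C4 m p X"
    and c5W: "last W = hd P" and c5X: "last X = hd R"
    and c6P: "C6 m p P" and c6R: "C6 m p R"
  shows "chain ([W] @ map (\<lambda>j. rhoP m (12 * int j) P) [0..<k] @ [X] @ map (\<lambda>j. rhoP m (12 * int j) R) [0..<k])
    \<and> closed_type_cycle m 2 (concat_walk ([W] @ map (\<lambda>j. rhoP m (12 * int j) P) [0..<k] @ [X] @ map (\<lambda>j. rhoP m (12 * int j) R) [0..<k]))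
    \<and> butlast (concat_walk ([W] @ map (\<lambda>j. rhoP m (12 * int j) P) [0..<k] @ [X] @ map (\<lambda>j. rhoP m (12 * int j) R) [0..<k]))
       = butlast W @ lay m k P @ butlast X @ lay m k R
    \<and> set (butlast P) \<subseteq> Vi p 1 \<inter> verts m \<and> set (butlast R) \<subseteq> Vi p 1 \<inter> verts m"
proof -
  define F where "F = map (\<lambda>j. rhoP m (12 * int j) P) [0..<k]"
  define G where "G = map (\<lambda>j. rhoP m (12 * int j) R) [0..<k]"
  define L where "L = [W] @ F @ [X] @ G"
  have m0: "m > 0" and pm: "p + 12 \<le> m" using mdef k1 p11 by auto
  have W: "W \<noteq> []" "distinct W" "set W \<subseteq> verts m" "walk m W" using dipathD[OF dW] by auto
  have X: "X \<noteq> []" "distinct X" "set X \<subseteq> verts m" "walk m X" using dipathD[OF dX] by auto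
  have P: "P \<noteq> []" "distinct P" "set P \<subseteq> verts m" "walk m P" using dipathD[OF dP] by auto
  have R: "R \<noteq> []" "distinct R" "set R \<subseteq> verts m" "walk m R" using dipathD[OF dR] by auto
  have lPs: "last P = rho m 12 (hd P)" using c6P by (simp add: C6_def)
  have lRs: "last R = rho m 12 (hd R)" using c6R by (simp add: C6_def)
  have sLW: "p \<le> snd (last W)" "snd (last W) \<le> p + 2" using c4_last[OF c4W] pm by auto
  have sLX: "p \<le> snd (last X)" "snd (last X) \<le> p + 2" using c4_last[OF c4X] pm by auto
  have cong: "(12 * int k) mod int m = (- int p) mod int m"
  proof -
    have "12 * int k = - int p + int m" using mdef by simp
    then show ?thesis by simp
  qed
  have lastF: "last (rhoP m (12 * int (k - 1)) P) = rho m (- int p) (hd P)"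
    using last_shift[OF m0 P(1) lPs, of "k - 1"] k1 rho_cong[OF cong] by simp
  have lastG: "last (rhoP m (12 * int (k - 1)) R) = rho m (- int p) (hd R)"
    using last_shift[OF m0 R(1) lRs, of "k - 1"] k1 rho_cong[OF cong] by simp
  have "snd (hd P) < m" using hd_in_set[OF P(1)] P(3) by (auto simp: verts_def)
  then have hP0: "hd (rhoP m (12 * int 0) P) = hd P" using P(1) by (simp add: hd_rhoP rho_0)
  have "snd (hd R) < m" using hd_in_set[OF R(1)] R(3) by (auto simp: verts_def)
  then have hR0: "hd (rhoP m (12 * int 0) R) = hd R" using R(1) by (simp add: hd_rhoP rho_0)
  have Fne: "F \<noteq> []" "G \<noteq> []" using k1 by (auto simp: F_def G_def)
  have lF: "last F = rhoP m (12 * int (k - 1)) P" and hF: "hd F = rhoP m (12 * int 0) P"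
    using k1 by (auto simp: F_def last_map hd_map)
  have lG: "last G = rhoP m (12 * int (k - 1)) R" and hG: "hd G = rhoP m (12 * int 0) R"
    using k1 by (auto simp: G_def last_map hd_map)
  have chF: "chain F" unfolding F_def by (rule chain_shift[OF m0 P(1) lPs])
  have chG: "chain G" unfolding G_def by (rule chain_shift[OF m0 R(1) lRs])
  have chXG: "chain ([X] @ G)" unfolding chain_append using chG Fne hG hR0 c5X by (simp add: chain_append chain_single)
  have chFXG: "chain (F @ [X] @ G)" unfolding chain_append[of F] using chF chXG Fne lF lastF hX c5W by (simp add: chain_append)
  have chL: "chain L" unfolding L_def chain_append[of "[W]"] using chFXG Fne hF hP0 c5W by (simp add: chain_append chain_single)
  have neL: "\<forall>Q\<in>set L. Q \<noteq> []" using W X P R by (auto simp: L_def F_def G_def rhoP_def)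
  have LL: "L \<noteq> []" by (simp add: L_def)
  note cw = cw_all[OF chL neL LL, of m]
  let ?C = "concat_walk L"
  have cwne: "?C \<noteq> []" and cwhd: "hd ?C = hd (hd L)" and cwlast: "last ?C = last (last L)"
    and cwws: "wsum m ?C = sum_list (map (wsum m) L)" and cwbl: "butlast ?C = concat (map butlast L)"
    and cwwalk: "walk m ?C \<longleftrightarrow> (\<forall>P\<in>set L. walk m P)" and cwset: "set ?C = \<Union> (set ` set L)"
    using cw by blast+
  have wL: "\<forall>Q\<in>set L. walk m Q" using W X P R walk_rhoP[OF m0] by (auto simp: L_def F_def G_def)
  have wC: "walk m ?C" using cwwalk wL by blast
  have sL: "\<forall>Q\<in>set L. set Q \<subseteq> verts m" using W X P R rho_verts[OF m0] by (auto simp: L_def F_def G_def set_rhoP)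
  have sC: "set ?C \<subseteq> verts m" unfolding cwset using sL by blast
  have lL: "last L = last G" using Fne by (simp add: L_def)
  have hL: "hd L = W" by (simp add: L_def)
  have "last ?C = last (last G)" using cwlast lL by simp
  also have "\<dots> = rho m (- int p) (last X)" using lG lastG c5X by simp
  also have "\<dots> = hd ?C" using cwhd hL hW by simp
  finally have clC: "last ?C = hd ?C" .
  have bC: "butlast ?C = butlast W @ lay m k P @ butlast X @ lay m k R"
    unfolding cwbl by (simp add: L_def F_def G_def lay_def butlast_rhoP o_def)
  have "length (butlast ?C) = plen W + k * plen P + plen X + k * plen R"
    unfolding bC by (simp add: lay_length plen_def)
  also have "\<dots> = p + k * (plen P + plen R)" using lWX by (simp add: algebra_simps)
  also have "\<dots> = m" using lPR mdef by simp
  finally have hm: "length (butlast ?C) = m" .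
  have l1: "length ?C - 1 = m" using hm by simp
  have l2: "length ?C > 0" using cwne by simp
  have lenC: "length ?C = Suc m" using l1 l2 by arith
  have blP: "set (butlast P) \<subseteq> Vi p 1" using bl_Vi[OF c6P _ P(1)] c5W sLW by (simp add: Vi_def)
  have blR: "set (butlast R) \<subseteq> Vi p 1" using bl_Vi[OF c6R _ R(1)] c5X sLX by (simp add: Vi_def)
  have blPv: "set (butlast P) \<subseteq> Vi p 1 \<inter> verts m" using blP P(3) by (auto dest: in_set_butlastD)
  have blRv: "set (butlast R) \<subseteq> Vi p 1 \<inter> verts m" using blR R(3) by (auto dest: in_set_butlastD)
  have pk: "p + 12 * k \<le> m" using mdef by simp
  have dlP: "distinct (lay m k P)" using lay_distinct[OF _ blPv pk m0] P(2) by (simp add: distinct_butlast)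
  have dlR: "distinct (lay m k R)" using lay_distinct[OF _ blRv pk m0] R(2) by (simp add: distinct_butlast)
  have PRb: "set (butlast P) \<inter> set (butlast R) = {}" using PR by (auto dest: in_set_butlastD)
  have dPR: "set (lay m k P) \<inter> set (lay m k R) = {}" using lay_disj[OF blPv blRv PRb pk m0] .
  have bWlow: "\<forall>v\<in>set (butlast W). snd v < p" using c4W by (auto simp: C4_def V0_def)
  have bXlow: "\<forall>v\<in>set (butlast X). snd v < p" using c4X by (auto simp: C4_def V0_def)
  have lPhi: "\<forall>v\<in>set (lay m k P). p \<le> snd v" using lay_snd[OF _ blP pk] by blast
  have lRhi: "\<forall>v\<in>set (lay m k R). p \<le> snd v" using lay_snd[OF _ blR pk] by blast
  have WXb: "set (butlast W) \<inter> set (butlast X) = {}" using WX by (auto dest: in_set_butlastD)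
  have dbW: "distinct (butlast W)" using W(2) by (rule distinct_butlast)
  have dbX: "distinct (butlast X)" using X(2) by (rule distinct_butlast)
  have j1: "set (butlast W) \<inter> set (lay m k P) = {}" using bWlow lPhi by fastforce
  have j2: "set (butlast W) \<inter> set (lay m k R) = {}" using bWlow lRhi by fastforce
  have j3: "set (butlast X) \<inter> set (lay m k P) = {}" using bXlow lPhi by fastforce
  have j4: "set (butlast X) \<inter> set (lay m k R) = {}" using bXlow lRhi by fastforce
  have dC: "distinct (butlast ?C)" unfolding bC distinct_append set_append
    using dbW dbX dlP dlR dPR WXb j1 j2 j3 j4 by blast
  have "wsum m ?C = wsum m W + k * 12 + wsum m X + k * 12"
  proof -
    have wP: "wsum m P = 12" using seg_wsum[OF p11 pm dP c6P] c5W sLW by simp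
    have wR: "wsum m R = 12" using seg_wsum[OF p11 pm dR c6R] c5X sLX by simp
    have "wsum m ?C = sum_list (map (wsum m) L)" using cwws .
    also have "\<dots> = wsum m W + sum_list (map (\<lambda>j. wsum m (rhoP m (12 * int j) P)) [0..<k]) + wsum m X
        + sum_list (map (\<lambda>j. wsum m (rhoP m (12 * int j) R)) [0..<k])"
      by (simp add: L_def F_def G_def o_def)
    also have "\<dots> = wsum m W + k * 12 + wsum m X + k * 12"
      using wP wR by (simp add: wsum_rhoP[OF m0 P(3)] wsum_rhoP[OF m0 R(3)] sum_list_triv)
    finally show ?thesis .
  qed
  moreover have "wsum m W + wsum m X = 2 * p"
  proof -
    have bW3: "\<forall>v\<in>set (butlast W). snd v + 3 < m" using bWlow pm by auto
    have bX3: "\<forall>v\<in>set (butlast X). snd v + 3 < m" using bXlow pm by auto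
    have m3: "m > 3" using pm p11 by simp
    have e1: "snd (last W) = snd (hd W) + wsum m W" using unwrap[OF m3 W(4) W(3) bW3 W(1)] .
    have e2: "snd (last X) = snd (hd X) + wsum m X" using unwrap[OF m3 X(4) X(3) bX3 X(1)] .
    have e3: "snd (hd X) = snd (last W) - p" using hX rho_snd_eq[of "last W" "- int p" m] sLW pm by simp
    have e4: "snd (hd W) = snd (last X) - p" using hW rho_snd_eq[of "last X" "- int p" m] sLX pm by simp
    show ?thesis using e1 e2 e3 e4 sLW sLX by linarith
  qed
  ultimately have "wsum m ?C = 2 * m" using mdef by simp
  then have ct: "closed_type_cycle m 2 ?C" using closed_lemma[OF m0 wC lenC dC sC clC] by simp
  show ?thesis using chL ct bC blPv blRv by (simp add: L_def F_def G_def)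
qed


lemma lowhi: fixes p :: nat assumes a: "\<forall>v\<in>A. snd v < p" and b: "\<forall>v\<in>B. p \<le> snd v"
  shows "A \<inter> B = {} \<and> B \<inter> A = {}"
proof -
  have "False" if x: "x \<in> A" "x \<in> B" for x
  proof -
    have "snd x < p" using a x(1) by blast
    moreover have "p \<le> snd x" using b x(2) by blast
    ultimately show False by simp
  qed
  then show ?thesis by blast
qed

lemma bl_disj: "set A \<inter> set B = {} \<Longrightarrow> set (butlast A) \<inter> set (butlast B) = {}"
  by (auto dest: in_set_butlastD)

theorem mainTheorem5:
  fixes m p k :: nat and W X Y Z P00 P10 Q00 Q10 :: "vert list"
  assumes "p \<in> {11, 13, 17, 19}"
    and "m = p + 12 * k"
    and "type2_basic m p k W X Y Z P00 P10 Q00 Q10"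
  shows "let L0 = [W] @ map (\<lambda>j. rhoP m (12 * int j) P00) [0..<k] @ [X] @
                  map (\<lambda>j. rhoP m (12 * int j) P10) [0..<k];
             L1 = [Y] @ map (\<lambda>j. rhoP m (12 * int j) Q00) [0..<k] @ [Z] @
                  map (\<lambda>j. rhoP m (12 * int j) Q10) [0..<k];
             C0 = concat_walk L0; C1 = concat_walk L1
         in chain L0 \<and> chain L1 \<and>
            closed_type_cycle m 2 C0 \<and> closed_type_cycle m 2 C1 \<and>
            Cm_factor m [butlast C0, butlast C1]"
proof -
  note T = assms(3)[unfolded type2_basic_def]
  have p11: "p \<ge> 11" using assms(1) by auto
  have dW: "dipath m W" and dX: "dipath m X" and dY: "dipath m Y" and dZ: "dipath m Z"
    and dP0: "dipath m P00" and dP1: "dipath m P10" and dQ0: "dipath m Q00" and dQ1: "dipath m Q10"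
    using T[THEN conjunct1] by simp_all
  have c2: "hd X = rho m (- int p) (last W)" "hd W = rho m (- int p) (last X)"
      "hd Z = rho m (- int p) (last Y)" "hd Y = rho m (- int p) (last Z)" using T by blast+
  have c3: "plen W + plen X = p" "plen Y + plen Z = p" using T by blast+
  have c4: "C4 m p W" "C4 m p X" "C4 m p Y" "C4 m p Z" using T by blast+
  have c5: "last W = hd P00" "last X = hd P10" "last Y = hd Q00" "last Z = hd Q10" using T by blast+
  show ?thesis
  proof (cases "k = 0")
    case True
    then have mp: "m = p" using assms(2) by simp
    have m0: "m > 0" using mp p11 by simp
    have ct: "closed_type_cycle m 2 (W @ tl X)" "closed_type_cycle m 2 (Y @ tl Z)"
      "set (W @ tl X) \<inter> set (Y @ tl Z) = {}" using T True by blast+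
    have cg: "(- int p) mod int m = 0 mod int m" using mp by simp
    have "last W \<in> set W" using dipathD[OF dW] by simp
    then have "snd (last W) < m" using dipathD[OF dW] unfolding verts_def by blast
    then have e1: "last W = hd X" using c2(1) rho_cong[OF cg] rho_0 by simp
    have "last Y \<in> set Y" using dipathD[OF dY] by simp
    then have "snd (last Y) < m" using dipathD[OF dY] unfolding verts_def by blast
    then have e2: "last Y = hd Z" using c2(3) rho_cong[OF cg] rho_0 by simp
    have dc: "dicycle m (butlast (W @ tl X))" "dicycle m (butlast (Y @ tl Z))"
      using ct by (auto simp: closed_type_cycle_def type_cycle_def)
    have dj: "set (butlast (W @ tl X)) \<inter> set (butlast (Y @ tl Z)) = {}"
      using bl_disj[OF ct(3)] .
    have F: "Cm_factor m [butlast (W @ tl X), butlast (Y @ tl Z)]" using factor2[OF dc dj] .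
    show ?thesis unfolding Let_def using True e1 e2 ct F
      by (simp add: chain_Cons2 chain_single)
  next
    case False
    then have k1: "k \<ge> 1" by simp
    have m0: "m > 0" using assms(2) p11 by simp
    have dj1: "disj4 P00 P10 Q00 Q10" and dj2: "disj4 W X Y Z" using T k1 by blast+
    have c12: "plen P00 + plen P10 = 12" "plen Q00 + plen Q10 = 12" using T k1 by blast+
    have c6: "C6 m p P00" "C6 m p P10" "C6 m p Q00" "C6 m p Q10" using T k1 by blast+
    have WX: "set W \<inter> set X = {}" and YZ: "set Y \<inter> set Z = {}" using dj2 by (auto simp: disj4_def)
    have PR0: "set P00 \<inter> set P10 = {}" and PR1: "set Q00 \<inter> set Q10 = {}" using dj1 by (auto simp: disj4_def)
    note H0 = half[OF p11 k1 assms(2) dW dX dP0 dP1 WX PR0 c2(1) c2(2) c3(1) c12(1) c4(1) c4(2) c5(1) c5(2) c6(1) c6(2)]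
    note H1 = half[OF p11 k1 assms(2) dY dZ dQ0 dQ1 YZ PR1 c2(3) c2(4) c3(2) c12(2) c4(3) c4(4) c5(3) c5(4) c6(3) c6(4)]
    define C0 where "C0 = concat_walk ([W] @ map (\<lambda>j. rhoP m (12 * int j) P00) [0..<k] @ [X] @
                  map (\<lambda>j. rhoP m (12 * int j) P10) [0..<k])"
    define C1 where "C1 = concat_walk ([Y] @ map (\<lambda>j. rhoP m (12 * int j) Q00) [0..<k] @ [Z] @
                  map (\<lambda>j. rhoP m (12 * int j) Q10) [0..<k])"
    have ct0: "closed_type_cycle m 2 C0" using H0 unfolding C0_def by blast
    have ct1: "closed_type_cycle m 2 C1" using H1 unfolding C1_def by blast
    have b0: "butlast C0 = butlast W @ lay m k P00 @ butlast X @ lay m k P10" using H0 unfolding C0_def by blast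
    have b1: "butlast C1 = butlast Y @ lay m k Q00 @ butlast Z @ lay m k Q10" using H1 unfolding C1_def by blast
    have v: "set (butlast P00) \<subseteq> Vi p 1 \<inter> verts m" "set (butlast P10) \<subseteq> Vi p 1 \<inter> verts m"
      "set (butlast Q00) \<subseteq> Vi p 1 \<inter> verts m" "set (butlast Q10) \<subseteq> Vi p 1 \<inter> verts m"
      using H0 H1 by blast+
    have pk: "p + 12 * k \<le> m" using assms(2) by simp
    have lowW: "\<forall>v\<in>set (butlast W). snd v < p" using c4(1) by (auto simp: C4_def V0_def)
    have lowX: "\<forall>v\<in>set (butlast X). snd v < p" using c4(2) by (auto simp: C4_def V0_def)
    have lowY: "\<forall>v\<in>set (butlast Y). snd v < p" using c4(3) by (auto simp: C4_def V0_def)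
    have lowZ: "\<forall>v\<in>set (butlast Z). snd v < p" using c4(4) by (auto simp: C4_def V0_def)
    have hiP0: "\<forall>v\<in>set (lay m k P00). p \<le> snd v" using lay_snd[OF _ _ pk] v(1) by blast
    have hiP1: "\<forall>v\<in>set (lay m k P10). p \<le> snd v" using lay_snd[OF _ _ pk] v(2) by blast
    have hiQ0: "\<forall>v\<in>set (lay m k Q00). p \<le> snd v" using lay_snd[OF _ _ pk] v(3) by blast
    have hiQ1: "\<forall>v\<in>set (lay m k Q10). p \<le> snd v" using lay_snd[OF _ _ pk] v(4) by blast
    have ll: "set (butlast W) \<inter> set (butlast Y) = {}" "set (butlast W) \<inter> set (butlast Z) = {}"
      "set (butlast X) \<inter> set (butlast Y) = {}" "set (butlast X) \<inter> set (butlast Z) = {}"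
    proof -
      have "set W \<inter> set Y = {}" "set W \<inter> set Z = {}" "set X \<inter> set Y = {}" "set X \<inter> set Z = {}"
        using dj2 unfolding disj4_def by blast+
      then show "set (butlast W) \<inter> set (butlast Y) = {}" "set (butlast W) \<inter> set (butlast Z) = {}"
        "set (butlast X) \<inter> set (butlast Y) = {}" "set (butlast X) \<inter> set (butlast Z) = {}"
        by (simp_all add: bl_disj)
    qed
    have bb: "set (butlast P00) \<inter> set (butlast Q00) = {}" "set (butlast P00) \<inter> set (butlast Q10) = {}"
      "set (butlast P10) \<inter> set (butlast Q00) = {}" "set (butlast P10) \<inter> set (butlast Q10) = {}"
    proof -
      have "set P00 \<inter> set Q00 = {}" "set P00 \<inter> set Q10 = {}" "set P10 \<inter> set Q00 = {}" "set P10 \<inter> set Q10 = {}"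
        using dj1 unfolding disj4_def by blast+
      then show "set (butlast P00) \<inter> set (butlast Q00) = {}" "set (butlast P00) \<inter> set (butlast Q10) = {}"
        "set (butlast P10) \<inter> set (butlast Q00) = {}" "set (butlast P10) \<inter> set (butlast Q10) = {}"
        by (simp_all add: bl_disj)
    qed
    note hh = lay_disj[OF v(1) v(3) bb(1) pk m0] lay_disj[OF v(1) v(4) bb(2) pk m0]
        lay_disj[OF v(2) v(3) bb(3) pk m0] lay_disj[OF v(2) v(4) bb(4) pk m0]
    note lh = lowhi[OF lowW hiQ0] lowhi[OF lowW hiQ1] lowhi[OF lowX hiQ0] lowhi[OF lowX hiQ1]
        lowhi[OF lowY hiP0] lowhi[OF lowZ hiP0] lowhi[OF lowY hiP1] lowhi[OF lowZ hiP1]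
    have dj: "set (butlast C0) \<inter> set (butlast C1) = {}"
      unfolding b0 b1 set_append Int_Un_distrib Int_Un_distrib2 Un_empty
      using ll hh lh by simp
    have dc: "dicycle m (butlast C0)" "dicycle m (butlast C1)"
      using ct0 ct1 by (auto simp: closed_type_cycle_def type_cycle_def)
    have F: "Cm_factor m [butlast C0, butlast C1]" using factor2[OF dc dj] .
    show ?thesis unfolding Let_def C0_def[symmetric] C1_def[symmetric] using H0 H1 ct0 ct1 F by blast
  qed
qed

end
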